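(* With notation as in the context, for each $1\le m\le d$ the series $I_m=\sum_{k>dn,\ k\equiv m \pmod d}P_n(k)$ converges and \[ I_m=\sum_{\substack{2\le j\le a\\ j\equiv a\ (\mathrm{mod}\ 2)}}A_j\,\zeta_m(j)-B_m, \] where $A_j=\sum_{l=-n}^nA_{l,j}(n)$ and \[ B_m=\sum_{j=1}^a\sum_{l=-n}^{n}A_{l,j}(n)\Bigl(\frac1{m^j}+\frac1{(d+m)^j}+\cdots+\frac1{(d(n-l-1)+m)^j}\Bigr) \] (the inner sum being over the terms $1/(dk+m)^j$ for $0\le k\le n-l-1$, empty if $l=n$). Consequently, for any real $a_1,\dots,a_d$, $I=\sum_{m=1}^d a_mI_m$ equals $\sum_{2\le j\le a,\,j\equiv a(2)}A_jL(j)-\sum_{m=1}^dB_ma_m$ where $L(s)=\sum_{k\ge1}a_kk^{-s}$ with $a_{k+d}=a_k$.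
   Context: Fix positive integers $d,a,b$ with $a\ge 2b$ and a positive integer $n$. Let $Q_n(t)=\prod_{dn<l\le (d+2b)n}(t-l)(t+l)$, $R_n(t)=\bigl(\prod_{-n\le l\le n}(t-dl)\bigr)^a$, and $P_n(t)=\frac{Q_n(t)}{R_n(t)}((2n)!)^{a-2b}d^{2na}$, with unique partial fraction decomposition $P_n(t)=\sum_{j=1}^{a}\sum_{l=-n}^n A_{l,j}(n)(t-dl)^{-j}$, $A_{l,j}(n)\in\mathbb Q$. For $1\le m\le d$ and $\mathrm{Re}(s)>1$, $\zeta_m(s)=\sum_{k\ge1,\ k\equiv m\ (\mathrm{mod}\ d)}k^{-s}$. *)

theory Defs
  imports "HOL-Analysis.Analysis"
begin

definition Qn :: "nat \<Rightarrow> nat \<Rightarrow> nat \<Rightarrow> real \<Rightarrow> real" where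
  "Qn d b n t = (\<Prod>l\<in>{d*n<..(d+2*b)*n}. (t - real l) * (t + real l))"

definition Rn :: "nat \<Rightarrow> nat \<Rightarrow> nat \<Rightarrow> real \<Rightarrow> real" where
  "Rn d a n t = (\<Prod>l\<in>{-int n..int n}. (t - real d * of_int l)) ^ a"

definition Pn :: "nat \<Rightarrow> nat \<Rightarrow> nat \<Rightarrow> nat \<Rightarrow> real \<Rightarrow> real" where
  "Pn d a b n t = Qn d b n t / Rn d a n t * (fact (2*n)) ^ (a - 2*b) * real d ^ (2*n*a)"

definition zeta_m :: "nat \<Rightarrow> nat \<Rightarrow> nat \<Rightarrow> real" where
  "zeta_m d m s = (\<Sum>\<^sub>\<infinity>k\<in>{k::nat. 1 \<le> k \<and> k mod d = m mod d}. 1 / real k ^ s)"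

definition Acoef :: "(int \<Rightarrow> nat \<Rightarrow> real) \<Rightarrow> nat \<Rightarrow> nat \<Rightarrow> real" where
  "Acoef A n j = (\<Sum>l\<in>{-int n..int n}. A l j)"

definition Bcoef :: "(int \<Rightarrow> nat \<Rightarrow> real) \<Rightarrow> nat \<Rightarrow> nat \<Rightarrow> nat \<Rightarrow> nat \<Rightarrow> real" where
  "Bcoef A d a n m = (\<Sum>j\<in>{1..a}. \<Sum>l\<in>{-int n..int n}.
       A l j * (\<Sum>k\<in>{0..int n - l - 1}. 1 / (real d * of_int k + real m) ^ j))"

definition Lser :: "(nat \<Rightarrow> real) \<Rightarrow> nat \<Rightarrow> real" where
  "Lser c s = (\<Sum>\<^sub>\<infinity>k\<in>{1::nat..}. c k / real k ^ s)"

end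

theory Submission
  imports Defs "HOL-Real_Asymp.Real_Asymp"
begin


lemma pf_zero_top:
  fixes x :: "int \<Rightarrow> real" and c :: "int \<Rightarrow> nat \<Rightarrow> real"
  assumes fin: "finite L" and inj: "inj_on x L" and l0: "l0 \<in> L" and N: "N > 0"
    and z: "\<And>t. (\<forall>l\<in>L. t \<noteq> x l) \<Longrightarrow> (\<Sum>j\<in>{1..N}. \<Sum>l\<in>L. c l j / (t - x l)^j) = 0"
  shows "c l0 N = 0"
proof -
  define h where "h t = (\<Sum>j\<in>{1..N}. \<Sum>l\<in>L-{l0}. c l j * (t - x l0)^N / (t - x l)^j)
      + (\<Sum>j\<in>{1..N}. c l0 j * (t - x l0)^(N - j))" for t
  have ne: "\<forall>l\<in>L-{l0}. x l0 - x l \<noteq> 0" using inj l0 by (auto simp: inj_on_def)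
  have "isCont h (x l0)" unfolding h_def
    using ne by (intro continuous_intros) auto
  hence t1: "(h \<longlongrightarrow> h (x l0)) (at (x l0))" by (simp add: isCont_def)
  have hx: "h (x l0) = c l0 N"
  proof -
    have "(\<Sum>j\<in>{1..N}. c l0 j * (x l0 - x l0)^(N - j)) = (\<Sum>j\<in>{1..N}. if j = N then c l0 j else 0)"
      by (intro sum.cong) auto
    also have "\<dots> = c l0 N" using N by simp
    finally show ?thesis unfolding h_def using N by (simp add: zero_power)
  qed
  have ev: "eventually (\<lambda>t. t \<notin> x ` (L - {l0})) (at (x l0))"
    using eventually_ball_finite[of "x ` (L - {l0})" "\<lambda>t y. t \<noteq> y" "at (x l0)"] fin
    by (auto simp: eventually_neq_at_within elim!: eventually_mono)
  have ev2: "eventually (\<lambda>t. t \<notin> x ` (L - {l0}) \<and> t \<noteq> x l0) (at (x l0))"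
    using ev by (auto intro!: eventually_conj simp: eventually_neq_at_within)
  have key: "h t = 0" if tn: "t \<notin> x ` (L - {l0})" and tne: "t \<noteq> x l0" for t
  proof -
    have np: "\<forall>l\<in>L. t \<noteq> x l" using tn tne by auto
    have "(t - x l0)^N * (\<Sum>j\<in>{1..N}. \<Sum>l\<in>L. c l j / (t - x l)^j)
        = (\<Sum>j\<in>{1..N}. \<Sum>l\<in>L. c l j * (t - x l0)^N / (t - x l)^j)"
      by (simp add: sum_distrib_left algebra_simps)
    also have "\<dots> = (\<Sum>j\<in>{1..N}. (\<Sum>l\<in>L-{l0}. c l j * (t - x l0)^N / (t - x l)^j) + c l0 j * (t - x l0)^N / (t - x l0)^j)"
      by (intro sum.cong refl) (simp add: sum.remove[OF fin l0] add.commute)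
    also have "\<dots> = h t" unfolding h_def sum.distrib
      using tne by (auto intro!: sum.cong simp: power_diff)
    finally show ?thesis using z[OF np] by simp
  qed
  have "eventually (\<lambda>t. h t = 0) (at (x l0))"
    using ev2 by (rule eventually_mono) (use key in auto)
  hence "(h \<longlongrightarrow> 0) (at (x l0))" by (rule tendsto_eventually)
  from tendsto_unique[OF _ t1 this] hx show ?thesis by simp
qed

lemma pf_zero:
  fixes x :: "int \<Rightarrow> real" and c :: "int \<Rightarrow> nat \<Rightarrow> real"
  assumes fin: "finite L" and inj: "inj_on x L"
  shows "(\<forall>t. (\<forall>l\<in>L. t \<noteq> x l) \<longrightarrow> (\<Sum>j\<in>{1..N}. \<Sum>l\<in>L. c l j / (t - x l)^j) = 0)
     \<Longrightarrow> (\<forall>l\<in>L. \<forall>j\<in>{1..N}. c l j = 0)"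
proof (induction N)
  case 0
  then show ?case by simp
next
  case (Suc N)
  have top: "c l (Suc N) = 0" if "l \<in> L" for l
    using pf_zero_top[OF fin inj that, of "Suc N" c] Suc.prems by blast
  have "\<forall>t. (\<forall>l\<in>L. t \<noteq> x l) \<longrightarrow> (\<Sum>j\<in>{1..N}. \<Sum>l\<in>L. c l j / (t - x l)^j) = 0"
  proof (intro allI impI)
    fix t assume "\<forall>l\<in>L. t \<noteq> x l"
    with Suc.prems have "(\<Sum>j\<in>{1..Suc N}. \<Sum>l\<in>L. c l j / (t - x l)^j) = 0" by blast
    thus "(\<Sum>j\<in>{1..N}. \<Sum>l\<in>L. c l j / (t - x l)^j) = 0"
      using top by simp
  qed
  from Suc.IH[OF this] top show ?case
    by (metis atLeastAtMost_iff le_Suc_eq)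
qed



lemma sum_neg_int: "(\<Sum>l\<in>{-int n..int n}. f (-l)) = (\<Sum>l\<in>{-int n..int n}. f l)"
  by (rule sum.reindex_bij_witness[of _ uminus uminus]) auto

lemma prod_neg_int: "(\<Prod>l\<in>{-int n..int n}. f (-l)) = (\<Prod>l\<in>{-int n..int n}. f l)"
  by (rule prod.reindex_bij_witness[of _ uminus uminus]) auto

lemma Qn_even: "Qn d b n (-t) = Qn d b n t"
  unfolding Qn_def by (intro prod.cong) (auto simp: algebra_simps)

lemma Rn_odd: "Rn d a n (-t) = (-1)^a * Rn d a n t"
proof -
  have "(\<Prod>l\<in>{-int n..int n}. (-t - real d * of_int l)) = (\<Prod>l\<in>{-int n..int n}. (-1) * (t - real d * of_int (-l)))"
    by (intro prod.cong) (auto simp: algebra_simps)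
  also have "\<dots> = (\<Prod>l\<in>{-int n..int n}. (-1::real)) * (\<Prod>l\<in>{-int n..int n}. (t - real d * of_int (-l)))"
    by (rule prod.distrib)
  also have "(\<Prod>l\<in>{-int n..int n}. (-1::real)) = -1"
    by (simp add: nat_add_distrib nat_mult_distrib)
  also have "(\<Prod>l\<in>{-int n..int n}. (t - real d * of_int (-l))) = (\<Prod>l\<in>{-int n..int n}. (t - real d * of_int l))"
    by (rule prod_neg_int[of "\<lambda>l. t - real d * of_int l" n])
  finally show ?thesis unfolding Rn_def by (metis mult_minus1 power_minus)
qed

lemma Pn_sym: "Pn d a b n (-t) = (-1)^a * Pn d a b n t"
  unfolding Pn_def Qn_even Rn_odd by (cases "even a") auto



lemma Acoef_parity:
  fixes d a b n :: nat and A :: "int \<Rightarrow> nat \<Rightarrow> real"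
  assumes "d > 0"
    and pfd: "\<And>t::real. (\<forall>l\<in>{-int n..int n}. t \<noteq> real d * of_int l) \<Longrightarrow>
        Pn d a b n t = (\<Sum>j\<in>{1..a}. \<Sum>l\<in>{-int n..int n}. A l j / (t - real d * of_int l) ^ j)"
    and j: "j \<in> {1..a}" and par: "j mod 2 \<noteq> a mod 2"
  shows "Acoef A n j = 0"
proof -
  define x where "x l = real d * of_int l" for l :: int
  define L where "L = {-int n..int n}"
  define c where "c l j = (-1)^j * A (-l) j - (-1)^a * A l j" for l :: int and j :: nat
  have inj: "inj_on x L" using assms(1) by (auto simp: inj_on_def x_def)
  have z: "\<forall>t. (\<forall>l\<in>L. t \<noteq> x l) \<longrightarrow> (\<Sum>j\<in>{1..a}. \<Sum>l\<in>L. c l j / (t - x l)^j) = 0"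
  proof (intro allI impI)
    fix t assume np: "\<forall>l\<in>L. t \<noteq> x l"
    have np': "\<forall>l\<in>L. -t \<noteq> x l"
    proof
      fix l assume "l \<in> L"
      hence "-l \<in> L" by (auto simp: L_def)
      with np have "t \<noteq> x (-l)" by blast
      thus "-t \<noteq> x l" by (auto simp: x_def)
    qed
    have e1: "Pn d a b n (-t) = (\<Sum>j\<in>{1..a}. \<Sum>l\<in>L. (-1)^j * A (-l) j / (t - x l)^j)"
    proof -
      have "Pn d a b n (-t) = (\<Sum>j\<in>{1..a}. \<Sum>l\<in>L. A l j / (-t - x l)^j)"
        using pfd[of "-t"] np' by (simp add: L_def x_def)
      also have "\<dots> = (\<Sum>j\<in>{1..a}. \<Sum>l\<in>L. (-1)^j * A l j / (t - x (-l))^j)"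
      proof (intro sum.cong refl)
        fix j l
        have "(-t - x l)^j = (-1)^j * (t - x (-l))^j"
          by (simp add: x_def power_mult_distrib[symmetric])
        thus "A l j / (-t - x l)^j = (-1)^j * A l j / (t - x (-l))^j"
          by (cases "even j") simp_all
      qed
      also have "\<dots> = (\<Sum>j\<in>{1..a}. \<Sum>l\<in>L. (-1)^j * A (-l) j / (t - x l)^j)"
        unfolding L_def
      proof (rule sum.cong[OF refl])
        fix j
        show "(\<Sum>l\<in>{-int n..int n}. (-1)^j * A l j / (t - x (-l))^j) = (\<Sum>l\<in>{-int n..int n}. (-1)^j * A (-l) j / (t - x l)^j)"
          using sum_neg_int[of "\<lambda>l. (-1)^j * A (-l) j / (t - x l)^j" n] by simp
      qed
      finally show ?thesis .
    qed
    have e2: "Pn d a b n t = (\<Sum>j\<in>{1..a}. \<Sum>l\<in>L. A l j / (t - x l)^j)"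
      using pfd[of t] np by (simp add: L_def x_def)
    have "(\<Sum>j\<in>{1..a}. \<Sum>l\<in>L. c l j / (t - x l)^j)
        = Pn d a b n (-t) - (-1)^a * Pn d a b n t"
      unfolding e1 e2 c_def
      by (simp add: sum_subtractf diff_divide_distrib sum_distrib_left)
    also have "\<dots> = 0" by (simp add: Pn_sym)
    finally show "(\<Sum>j\<in>{1..a}. \<Sum>l\<in>L. c l j / (t - x l)^j) = 0" .
  qed
  have cz: "\<forall>l\<in>L. c l j = 0" using pf_zero[OF _ inj, where N=a and c=c] z j by (auto simp: L_def)
  have "(-1)^j * Acoef A n j = (-1)^a * Acoef A n j"
  proof -
    have "(-1)^j * Acoef A n j = (\<Sum>l\<in>L. (-1)^j * A (-l) j)"
      unfolding Acoef_def L_def sum_distrib_left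
      using sum_neg_int[of "\<lambda>l. (-1)^j * A (-l) j" n] by simp
    also have "\<dots> = (\<Sum>l\<in>L. (-1)^a * A l j)"
      using cz by (intro sum.cong refl) (auto simp: c_def)
    also have "\<dots> = (-1)^a * Acoef A n j" by (simp add: Acoef_def L_def sum_distrib_left)
    finally show ?thesis .
  qed
  moreover have "(-1::real)^j = - ((-1)^a)"
    using par by (cases "even j"; cases "even a") (auto simp: minus_one_power_iff odd_iff_mod_2_eq_one)
  ultimately show ?thesis by simp
qed



lemma Pn_bound:
  fixes d a b n :: nat
  assumes ab: "a \<ge> 2 * b" and b: "b > 0"
  shows "\<exists>C\<ge>0. \<forall>t::real. t \<ge> 2 * real ((d + 2*b) * n) + 1 \<longrightarrow> \<bar>Pn d a b n t\<bar> \<le> C / t^2"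
proof -
  define K :: real where "K = fact (2*n) ^ (a - 2*b) * real d ^ (2*n*a)"
  define M where "M = (2*n+1)*a"
  have K0: "K \<ge> 0" by (simp add: K_def)
  have M: "4*b*n + 2 \<le> M" unfolding M_def using ab b
  proof -
    have "4*b*n \<le> 2*n*a" using ab by (metis mult.commute mult.left_commute mult_le_mono2 numeral_Bit0 mult_2)
    moreover have "2 \<le> a" using ab b by linarith
    moreover have "(2*n+1)*a = 2*n*a + a" by (simp add: algebra_simps)
    ultimately show "4*b*n + 2 \<le> (2*n+1)*a" by linarith
  qed
  show ?thesis
  proof (intro exI[of _ "K * 2^M"] conjI allI impI)
    show "0 \<le> K * 2^M" using K0 by simp
    fix t :: real assume t: "t \<ge> 2 * real ((d + 2*b) * n) + 1"
    have t1: "t \<ge> 1" using t of_nat_0_le_iff[of "(d + 2*b) * n"] by linarith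
    have Q0: "0 \<le> Qn d b n t" unfolding Qn_def
    proof (intro prod_nonneg ballI)
      fix l assume "l \<in> {d*n<..(d+2*b)*n}"
      hence "real l \<le> real ((d + 2*b) * n)" by (simp only: of_nat_le_iff greaterThanAtMost_iff)
      hence "real l \<le> t" using t by linarith
      thus "0 \<le> (t - real l) * (t + real l)" by simp
    qed
    have Q1: "Qn d b n t \<le> (t^2)^(2*b*n)"
    proof -
      have "Qn d b n t \<le> (\<Prod>l\<in>{d*n<..(d+2*b)*n}. t^2)" unfolding Qn_def
      proof (intro prod_mono conjI ballI)
        fix l assume "l \<in> {d*n<..(d+2*b)*n}"
        hence "real l \<le> real ((d + 2*b) * n)" by (simp only: of_nat_le_iff greaterThanAtMost_iff)
      hence "real l \<le> t" using t by linarith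
        thus "0 \<le> (t - real l) * (t + real l)" by simp
        show "(t - real l) * (t + real l) \<le> t^2" by (simp add: algebra_simps power2_eq_square)
      qed
      also have "\<dots> = (t^2)^(2*b*n)" by (simp add: algebra_simps)
      finally show ?thesis .
    qed
    have R1: "(t/2)^(2*n+1) \<le> (\<Prod>l\<in>{-int n..int n}. (t - real d * of_int l))"
    proof -
      have "(\<Prod>l\<in>{-int n..int n}. t/2) \<le> (\<Prod>l\<in>{-int n..int n}. (t - real d * of_int l))"
      proof (intro prod_mono conjI ballI)
        fix l assume l: "l \<in> {-int n..int n}"
        show "0 \<le> t/2" using t1 by simp
        have "real d * of_int l \<le> real d * real n" using l by (intro mult_left_mono) auto
        moreover have "real d * real n \<le> real ((d + 2*b) * n)" by (simp only: of_nat_mult[symmetric] of_nat_le_iff) simp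
        ultimately show "t/2 \<le> t - real d * of_int l" using t by linarith
      qed
      also have "(\<Prod>l\<in>{-int n..int n}. t/2) = (t/2)^(2*n+1)"
        by (simp add: nat_add_distrib nat_mult_distrib)
      finally show ?thesis by simp
    qed
    have R2: "(t/2)^M \<le> Rn d a n t" unfolding Rn_def M_def power_mult
      by (intro power_mono R1) (use t1 in simp)
    have Rpos: "0 < (t/2)^M" using t1 by simp
    have "\<bar>Pn d a b n t\<bar> = Qn d b n t / Rn d a n t * K"
      unfolding Pn_def K_def using Q0 Rpos R2 by simp
    also have "\<dots> \<le> (t^2)^(2*b*n) / (t/2)^M * K"
      using Q0 Q1 Rpos R2 K0 by (intro mult_right_mono frac_le) auto
    also have "\<dots> = K * 2^M * (t^(4*b*n) / t^M)"
      by (simp add: power_divide power_mult[symmetric] field_simps)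
    also have "t^(4*b*n) / t^M \<le> 1 / t^2"
    proof -
      have "t^(4*b*n) * t^2 \<le> t^M"
        unfolding power_add[symmetric] using t1 M by (intro power_increasing) auto
      thus ?thesis using t1 by (simp add: field_simps)
    qed
    finally show "\<bar>Pn d a b n t\<bar> \<le> K * 2^M / t^2" using K0 by (simp add: mult_left_mono)
  qed
qed



lemma lim_frac_pow:
  fixes c :: real
  assumes "j \<ge> 1"
  shows "((\<lambda>t. t / (t - c)^j) \<longlongrightarrow> (if j = 1 then 1 else 0)) at_top"
proof (cases "j = 1")
  case True
  then show ?thesis by simp real_asymp
next
  case False
  have f: "filterlim (\<lambda>t::real. t - c) at_top at_top" by real_asymp
  have "filterlim (\<lambda>t. (t - c)^(j-1)) at_top at_top"
    using False assms by (intro filterlim_pow_at_top[OF _ f]) auto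
  hence z: "((\<lambda>t. inverse ((t - c)^(j-1))) \<longlongrightarrow> 0) at_top"
    by (rule tendsto_inverse_0_at_top)
  have o: "((\<lambda>t. t / (t - c)) \<longlongrightarrow> 1) at_top" by real_asymp
  have "((\<lambda>t. t / (t - c) * inverse ((t - c)^(j-1))) \<longlongrightarrow> 1 * 0) at_top"
    by (rule tendsto_mult[OF o z])
  moreover have "eventually (\<lambda>t. t / (t - c) * inverse ((t - c)^(j-1)) = t / (t - c)^j) at_top"
  proof -
    have "eventually (\<lambda>t::real. t > c) at_top" by (rule eventually_gt_at_top)
    thus ?thesis
    proof (rule eventually_mono)
      fix t assume "t > c"
      have "(t - c)^j = (t - c) * (t - c)^(j-1)" using assms by (metis power_eq_if not_one_le_zero)
      thus "t / (t - c) * inverse ((t - c)^(j-1)) = t / (t - c)^j"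
        by (simp add: field_simps)
    qed
  qed
  ultimately have "((\<lambda>t. t / (t - c)^j) \<longlongrightarrow> 0) at_top"
    using tendsto_cong by fastforce
  thus ?thesis using False by simp
qed

lemma Acoef1_zero:
  fixes d a b n :: nat and A :: "int \<Rightarrow> nat \<Rightarrow> real"
  assumes "d > 0" "a > 0" "b > 0" and ab: "a \<ge> 2 * b"
    and pfd: "\<And>t::real. (\<forall>l\<in>{-int n..int n}. t \<noteq> real d * of_int l) \<Longrightarrow>
        Pn d a b n t = (\<Sum>j\<in>{1..a}. \<Sum>l\<in>{-int n..int n}. A l j / (t - real d * of_int l) ^ j)"
  shows "Acoef A n 1 = 0"
proof -
  obtain C where C: "C \<ge> 0" "\<And>t::real. t \<ge> 2 * real ((d + 2*b) * n) + 1 \<Longrightarrow> \<bar>Pn d a b n t\<bar> \<le> C / t^2"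
    using Pn_bound[OF ab assms(3), of d n] by blast
  have l1: "((\<lambda>t. t * Pn d a b n t) \<longlongrightarrow> 0) at_top"
  proof (rule Lim_null_comparison)
    show "eventually (\<lambda>t. norm (t * Pn d a b n t) \<le> C / t) at_top"
      using eventually_ge_at_top[of "2 * real ((d + 2*b) * n) + 1"]
    proof (rule eventually_mono)
      fix t assume t: "2 * real ((d + 2*b) * n) + 1 \<le> t"
      have t1: "1 \<le> t" "2 * real ((d + 2*b) * n) + 1 \<le> t"
        using t of_nat_0_le_iff[of "(d + 2*b) * n"] by linarith+
      have "norm (t * Pn d a b n t) = t * \<bar>Pn d a b n t\<bar>" using t1(1) by (simp add: abs_mult)
      also have "\<dots> \<le> t * (C / t^2)" using t1(1) by (intro mult_left_mono[OF C(2)[OF t1(2)]]) linarith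
      also have "\<dots> = C / t" using t1 by (simp add: power2_eq_square)
      finally show "norm (t * Pn d a b n t) \<le> C / t" .
    qed
    show "((\<lambda>t. C / t) \<longlongrightarrow> 0) at_top" by real_asymp
  qed
  define F where "F t = (\<Sum>j\<in>{1..a}. \<Sum>l\<in>{-int n..int n}. A l j * (t / (t - real d * of_int l) ^ j))" for t
  have l2: "(F \<longlongrightarrow> (\<Sum>j\<in>{1..a}. \<Sum>l\<in>{-int n..int n}. A l j * (if j = 1 then 1 else 0))) at_top"
    unfolding F_def by (intro tendsto_sum tendsto_mult tendsto_const lim_frac_pow) auto
  have ev: "eventually (\<lambda>t. t * Pn d a b n t = F t) at_top"
    using eventually_gt_at_top[of "real d * real n"]
  proof (rule eventually_mono)
    fix t assume t: "real d * real n < t"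
    have np: "\<forall>l\<in>{-int n..int n}. t \<noteq> real d * of_int l"
    proof
      fix l assume "l \<in> {-int n..int n}"
      hence "real d * of_int l \<le> real d * real n" by (intro mult_left_mono) auto
      thus "t \<noteq> real d * of_int l" using t by linarith
    qed
    show "t * Pn d a b n t = F t" unfolding pfd[OF np] F_def
      unfolding sum_distrib_left
      by (intro sum.cong refl) simp
  qed
  have l3: "((\<lambda>t. t * Pn d a b n t) \<longlongrightarrow> (\<Sum>j\<in>{1..a}. \<Sum>l\<in>{-int n..int n}. A l j * (if j = 1 then 1 else 0))) at_top"
    by (simp only: tendsto_cong[OF ev] l2)
  have "(\<Sum>j\<in>{1..a}. \<Sum>l\<in>{-int n..int n}. A l j * (if j = 1 then 1 else 0)) = (\<Sum>j\<in>{1..a}. if j = 1 then Acoef A n 1 else 0)"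
    by (rule sum.cong[OF refl]) (case_tac "x = 1", simp_all add: Acoef_def)
  also have "\<dots> = Acoef A n 1" using assms(2) by simp
  finally show ?thesis using tendsto_unique[OF _ l3 l1] by simp
qed



lemma bij_class:
  fixes d m c :: nat
  assumes d: "d > 0" and m: "m \<in> {1..d}"
  shows "bij_betw (\<lambda>i. d*(c+i)+m) UNIV {k. d*c < k \<and> k mod d = m mod d}"
proof (rule bij_betwI')
  fix x y :: nat
  show "(d*(c+x)+m = d*(c+y)+m) = (x = y)" using d by simp
next
  fix x :: nat
  have "(d*(c+x)+m) mod d = m mod d" by (simp add: mod_add_left_eq[symmetric])
  moreover have "d*c < d*(c+x)+m" using m d by (simp add: algebra_simps) 
  ultimately show "d*(c+x)+m \<in> {k. d*c < k \<and> k mod d = m mod d}" by simp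
next
  fix k assume k: "k \<in> {k. d*c < k \<and> k mod d = m mod d}"
  show "\<exists>x\<in>UNIV. k = d*(c+x)+m"
  proof (cases "m = d")
    case True
    with k have "k mod d = 0" by simp
    then obtain q where q: "k = d*q" by auto
    with k d have "c < q" by simp
    then show ?thesis using q True by (intro bexI[of _ "q - c - 1"]) (auto simp: algebra_simps)
  next
    case False
    with m have mm: "m mod d = m" "m < d" by auto
    with k have km: "k mod d = m" by simp
    have kq: "k = d*(k div d) + m" using km by (metis div_mult_mod_eq mult.commute)
    have "c \<le> k div d"
    proof (rule ccontr)
      assume "\<not> c \<le> k div d"
      hence "k div d + 1 \<le> c" by simp
      hence "d*(k div d + 1) \<le> d*c" by (intro mult_left_mono) auto
      with kq mm(2) k show False by (simp add: algebra_simps)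
    qed
    then show ?thesis using kq by (intro bexI[of _ "k div d - c"]) auto
  qed
qed

lemma summable_sq: "summable (\<lambda>i::nat. 1 / real (Suc i)^2)"
proof -
  have "summable (\<lambda>i::nat. inverse (real i ^ 2))" by (rule inverse_power_summable) simp
  hence "summable (\<lambda>i::nat. inverse (real (Suc i) ^ 2))" by (subst summable_Suc_iff)
  thus ?thesis by (simp add: divide_inverse)
qed

lemma g_summable:
  fixes d m j :: nat
  assumes "d > 0" "m \<ge> 1" "j \<ge> 2"
  shows "summable (\<lambda>p. 1 / real (d*p+m)^j)"
proof (rule summable_comparison_test'[OF summable_sq])
  fix p :: nat assume "p \<ge> 0"
  have "p \<le> d*p" using assms(1) by simp
  hence "Suc p \<le> d*p+m" using assms(2) by linarith
  hence "real (Suc p) \<le> real (d*p+m)" by (simp only: of_nat_le_iff)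
  show "norm (1 / real (d*p+m)^j) \<le> 1 / real (Suc p)^2"
  proof -
    have "real (Suc p)^2 \<le> real (Suc p)^j" using assms by (intro power_increasing) auto
    also have "\<dots> \<le> real (d*p+m)^j" using \<open>real (Suc p) \<le> real (d*p+m)\<close> by (intro power_mono) auto
    finally show ?thesis by (simp add: frac_le)
  qed
qed



lemma g_has_sum:
  fixes d m j :: nat
  assumes d: "d > 0" and m: "m \<in> {1..d}" and j: "j \<ge> 2"
  shows "((\<lambda>k. 1 / real k ^ j) has_sum suminf (\<lambda>p. 1 / real (d*p+m)^j)) {k. 1 \<le> k \<and> k mod d = m mod d}"
proof -
  have s: "summable (\<lambda>p. 1 / real (d*p+m)^j)" using g_summable[OF d _ j] m by auto
  have "((\<lambda>p. 1 / real (d*p+m)^j) has_sum suminf (\<lambda>p. 1 / real (d*p+m)^j)) UNIV"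
    using s by (intro norm_summable_imp_has_sum summable_sums) auto
  hence "((\<lambda>p. 1 / real (d*(0+p)+m)^j) has_sum suminf (\<lambda>p. 1 / real (d*p+m)^j)) UNIV" by simp
  hence "((\<lambda>k. 1 / real k ^ j) has_sum suminf (\<lambda>p. 1 / real (d*p+m)^j)) {k. d*0 < k \<and> k mod d = m mod d}"
    using has_sum_reindex_bij_betw[OF bij_class[OF d m, of 0], of "\<lambda>k. 1 / real k ^ j"] by simp
  moreover have "{k. d*0 < k \<and> k mod d = m mod d} = {k. 1 \<le> k \<and> k mod d = m mod d}" by auto
  ultimately show ?thesis by simp
qed

lemma zeta_eq:
  fixes d m j :: nat
  assumes d: "d > 0" and m: "m \<in> {1..d}" and j: "j \<ge> 2"
  shows "zeta_m d m j = suminf (\<lambda>p. 1 / real (d*p+m)^j)"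
  unfolding zeta_m_def using g_has_sum[OF assms] by (rule infsumI)

lemma sum_shift: fixes N p :: nat shows "(\<Sum>i<N. G (p+i)) = (\<Sum>q<p+N. G q) - (\<Sum>q<p. (G q :: real))"
  by (induction N) auto

lemma sum_int_range: "(\<Sum>k\<in>{0..int M - 1}. h k) = (\<Sum>p<M. h (int p))"
  by (rule sum.reindex_bij_witness[of _ int nat]) auto



lemma g1_lim:
  fixes d m i :: nat
  assumes d: "d > 0"
  shows "(\<lambda>N. 1 / real (d*(N+i)+m) ^ 1) \<longlonglongrightarrow> 0"
proof -
  have "filterlim (\<lambda>N. real (d*(N+i)+m)) at_top sequentially"
  proof (rule filterlim_at_top_mono[OF filterlim_real_sequentially])
    show "eventually (\<lambda>N. real N \<le> real (d*(N+i)+m)) sequentially"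
    proof (rule always_eventually, rule allI)
      fix N :: nat
      have "N \<le> d*N" using d by simp
      moreover have "d*(N+i)+m = d*N + (d*i+m)" by (simp add: algebra_simps)
      ultimately have "N \<le> d*(N+i)+m" by linarith
      thus "real N \<le> real (d*(N+i)+m)" by (simp only: of_nat_le_iff)
    qed
  qed
  hence "((\<lambda>N. 1 / real (d*(N+i)+m)) \<longlongrightarrow> 0) sequentially"
    by (intro tendsto_divide_0[OF tendsto_const] filterlim_at_top_imp_at_infinity)
  thus ?thesis by simp
qed

lemma main_m:
  fixes d a b n m :: nat and A :: "int \<Rightarrow> nat \<Rightarrow> real"
  assumes d: "d > 0" and a: "a > 0" and b: "b > 0" and ab: "a \<ge> 2 * b"
    and pfd: "\<And>t::real. (\<forall>l\<in>{-int n..int n}. t \<noteq> real d * of_int l) \<Longrightarrow>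
        Pn d a b n t = (\<Sum>j\<in>{1..a}. \<Sum>l\<in>{-int n..int n}. A l j / (t - real d * of_int l) ^ j)"
    and m: "m \<in> {1..d}"
  shows "((\<lambda>k::nat. Pn d a b n (real k)) has_sum
               ((\<Sum>j\<in>{j. 2 \<le> j \<and> j \<le> a \<and> j mod 2 = a mod 2}. Acoef A n j * zeta_m d m j)
                 - Bcoef A d a n m))
            {k. d * n < k \<and> k mod d = m mod d}"
proof -
  define J where "J = {j. 2 \<le> j \<and> j \<le> a \<and> j mod 2 = a mod 2}"
  define g where "g j q = 1 / real (d*q+m)^j" for j q :: nat
  define H where "H j M = (\<Sum>q<M. g j q)" for j M :: nat
  define L where "L = {-int n..int n}"
  define p where "p l = nat (int n - l)" for l
  define f where "f i = Pn d a b n (real (d*(n+i)+m))" for i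
  define Z where "Z j = suminf (g j)" for j
  define V where "V = (\<Sum>j\<in>J. Acoef A n j * zeta_m d m j) - Bcoef A d a n m"
  have m1: "m \<ge> 1" using m by simp
  have pl: "real (d*(p l + i)+m) = real (d*(n+i)+m) - real d * of_int l" if "l \<in> L" for l i
  proof -
    have rp: "real (p l) = real n - of_int l" using that by (simp add: p_def L_def)
    show ?thesis by (simp only: of_nat_add of_nat_mult rp) (simp add: algebra_simps)
  qed
  have fpf: "f i = (\<Sum>j\<in>{1..a}. \<Sum>l\<in>L. A l j * g j (p l + i))" for i
  proof -
    have np: "\<forall>l\<in>{-int n..int n}. real (d*(n+i)+m) \<noteq> real d * of_int l"
    proof
      fix l assume "l \<in> {-int n..int n}"
      hence "real d * of_int l \<le> real d * real n" by (intro mult_left_mono) auto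
      moreover have "d * n < d*(n+i)+m" using m1 by (simp add: algebra_simps)
      hence "real d * real n < real (d*(n+i)+m)" by (simp only: of_nat_mult[symmetric] of_nat_less_iff)
      ultimately show "real (d*(n+i)+m) \<noteq> real d * of_int l" by linarith
    qed
    show ?thesis unfolding f_def pfd[OF np] L_def[symmetric]
    proof (intro sum.cong refl)
      fix j l assume "l \<in> L"
      show "A l j / (real (d*(n+i)+m) - real d * of_int l) ^ j = A l j * g j (p l + i)"
        unfolding g_def pl[OF \<open>l \<in> L\<close>] by simp
    qed
  qed
  have partial: "(\<Sum>i<N. f i) = (\<Sum>j\<in>{1..a}. \<Sum>l\<in>L. A l j * (H j (p l + N) - H j (p l)))" for N
  proof -
    have "(\<Sum>i<N. f i) = (\<Sum>j\<in>{1..a}. \<Sum>l\<in>L. \<Sum>i<N. A l j * g j (p l + i))"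
      unfolding fpf by (simp add: sum.swap[of _ "{..<N}"])
    also have "\<dots> = (\<Sum>j\<in>{1..a}. \<Sum>l\<in>L. A l j * (H j (p l + N) - H j (p l)))"
      by (intro sum.cong refl) (simp add: sum_distrib_left[symmetric] sum_shift H_def)
    finally show ?thesis .
  qed
  have A1: "Acoef A n 1 = 0" using Acoef1_zero[OF d a b ab pfd] .
  have HZ: "(\<lambda>N. H j (q + N)) \<longlonglongrightarrow> Z j" if "j \<ge> 2" for j q
  proof -
    have "summable (g j)" unfolding g_def using g_summable[OF d m1 that] .
    hence "(\<lambda>M. H j M) \<longlonglongrightarrow> Z j" unfolding H_def Z_def by (rule summable_LIMSEQ)
    hence "(\<lambda>N. H j (N + q)) \<longlonglongrightarrow> Z j" by (rule LIMSEQ_ignore_initial_segment)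
    thus ?thesis by (simp add: add.commute)
  qed
  have T2: "(\<lambda>N. \<Sum>j\<in>{2..a}. \<Sum>l\<in>L. A l j * (H j (p l + N) - H j (p l)))
      \<longlonglongrightarrow> (\<Sum>j\<in>{2..a}. \<Sum>l\<in>L. A l j * (Z j - H j (p l)))"
    by (intro tendsto_sum tendsto_mult tendsto_diff tendsto_const HZ) auto
  have T1eq: "(\<Sum>l\<in>L. A l 1 * (H 1 (p l + N) - H 1 (p l)))
      = (\<Sum>l\<in>L. A l 1 * (\<Sum>i<p l. g 1 (N + i))) - (\<Sum>l\<in>L. A l 1 * H 1 (p l))" for N
  proof -
    have "(\<Sum>l\<in>L. A l 1 * (H 1 (p l + N) - H 1 (p l)))
        = (\<Sum>l\<in>L. A l 1 * (\<Sum>i<p l. g 1 (N + i)) + A l 1 * H 1 N - A l 1 * H 1 (p l))"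
    proof (rule sum.cong[OF refl])
      fix l
      have sh: "(\<Sum>i<p l. g 1 (N + i)) = H 1 (N + p l) - H 1 N"
        unfolding H_def by (rule sum_shift)
      show "A l 1 * (H 1 (p l + N) - H 1 (p l)) = A l 1 * (\<Sum>i<p l. g 1 (N + i)) + A l 1 * H 1 N - A l 1 * H 1 (p l)"
        unfolding sh by (simp add: add.commute algebra_simps)
    qed
    also have "\<dots> = (\<Sum>l\<in>L. A l 1 * (\<Sum>i<p l. g 1 (N + i))) + Acoef A n 1 * H 1 N - (\<Sum>l\<in>L. A l 1 * H 1 (p l))"
      by (simp add: sum.distrib sum_subtractf Acoef_def L_def sum_distrib_right)
    finally show ?thesis using A1 by simp
  qed
  have T1: "(\<lambda>N. \<Sum>l\<in>L. A l 1 * (H 1 (p l + N) - H 1 (p l)))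
      \<longlonglongrightarrow> 0 - (\<Sum>l\<in>L. A l 1 * H 1 (p l))"
    unfolding T1eq
  proof (intro tendsto_diff tendsto_const)
    have "(\<lambda>N. \<Sum>l\<in>L. A l 1 * (\<Sum>i<p l. g 1 (N + i))) \<longlonglongrightarrow> (\<Sum>l\<in>L. A l 1 * (\<Sum>i<p l. 0))"
      unfolding g_def by (intro tendsto_sum tendsto_mult tendsto_const g1_lim d)
    thus "(\<lambda>N. \<Sum>l\<in>L. A l 1 * (\<Sum>i<p l. g 1 (N + i))) \<longlonglongrightarrow> 0" by simp
  qed
  have split: "(\<Sum>j\<in>{1..a}. F j) = F 1 + (\<Sum>j\<in>{2..a}. F j)" for F :: "nat \<Rightarrow> real"
    using sum.atLeast_Suc_atMost[of 1 a F] a by (simp add: numeral_2_eq_2)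
  have lim: "(\<lambda>N. \<Sum>i<N. f i) \<longlonglongrightarrow> (0 - (\<Sum>l\<in>L. A l 1 * H 1 (p l))) + (\<Sum>j\<in>{2..a}. \<Sum>l\<in>L. A l j * (Z j - H j (p l)))"
    unfolding partial split by (intro tendsto_add T1 T2)
  have Bc: "Bcoef A d a n m = (\<Sum>j\<in>{1..a}. \<Sum>l\<in>L. A l j * H j (p l))"
    unfolding Bcoef_def L_def[symmetric]
  proof (intro sum.cong refl arg_cong2[where f="(*)"])
    fix j l assume l: "l \<in> L"
    have "int n - l - 1 = int (p l) - 1" using l by (simp add: p_def L_def)
    hence "(\<Sum>k\<in>{0..int n - l - 1}. 1 / (real d * of_int k + real m) ^ j)
        = (\<Sum>q<p l. 1 / (real d * of_int (int q) + real m) ^ j)"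
      by (simp only: sum_int_range)
    also have "\<dots> = H j (p l)" by (simp add: H_def g_def)
    finally show "(\<Sum>k\<in>{0..int n - l - 1}. 1 / (real d * of_int k + real m) ^ j) = H j (p l)" .
  qed
  have ZJ: "(\<Sum>j\<in>{2..a}. Acoef A n j * Z j) = (\<Sum>j\<in>J. Acoef A n j * zeta_m d m j)"
  proof -
    have "(\<Sum>j\<in>{2..a}. Acoef A n j * Z j) = (\<Sum>j\<in>J. Acoef A n j * Z j)"
    proof (rule sum.mono_neutral_right)
      show "J \<subseteq> {2..a}" by (auto simp: J_def)
      show "\<forall>j\<in>{2..a} - J. Acoef A n j * Z j = 0"
      proof
        fix j assume j: "j \<in> {2..a} - J"
        hence "j \<in> {1..a}" "j mod 2 \<noteq> a mod 2" by (auto simp: J_def)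
        thus "Acoef A n j * Z j = 0" using Acoef_parity[OF d pfd] by simp
      qed
    qed simp
    also have "\<dots> = (\<Sum>j\<in>J. Acoef A n j * zeta_m d m j)"
    proof (rule sum.cong[OF refl])
      fix j assume "j \<in> J"
      hence j2: "j \<ge> 2" by (simp add: J_def)
      have "g j = (\<lambda>q. 1 / real (d*q+m)^j)" by (rule ext) (simp add: g_def)
      thus "Acoef A n j * Z j = Acoef A n j * zeta_m d m j"
        by (simp only: Z_def zeta_eq[OF d m j2])
    qed
    finally show ?thesis .
  qed
  have Veq: "(0 - (\<Sum>l\<in>L. A l 1 * H 1 (p l))) + (\<Sum>j\<in>{2..a}. \<Sum>l\<in>L. A l j * (Z j - H j (p l))) = V"
  proof -
    have "(\<Sum>j\<in>{2..a}. \<Sum>l\<in>L. A l j * (Z j - H j (p l)))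
        = (\<Sum>j\<in>{2..a}. Acoef A n j * Z j) - (\<Sum>j\<in>{2..a}. \<Sum>l\<in>L. A l j * H j (p l))"
      by (simp add: right_diff_distrib sum_subtractf Acoef_def L_def sum_distrib_right)
    thus ?thesis unfolding V_def Bc split ZJ by simp
  qed
  have sums: "f sums V" unfolding sums_def using lim Veq by simp
  obtain C where C: "C \<ge> 0" "\<And>t::real. t \<ge> 2 * real ((d + 2*b) * n) + 1 \<Longrightarrow> \<bar>Pn d a b n t\<bar> \<le> C / t^2"
    using Pn_bound[OF ab b, of d n] by blast
  have summ: "summable (\<lambda>i. norm (f i))"
  proof (rule summable_comparison_test'[where N="nat \<lceil>2 * real ((d + 2*b) * n) + 1\<rceil>"])
    show "summable (\<lambda>i. C * (1 / real (Suc i)^2))" by (intro summable_mult summable_sq)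
    fix i assume i: "i \<ge> nat \<lceil>2 * real ((d + 2*b) * n) + 1\<rceil>"
    have le: "Suc i \<le> d*(n+i)+m"
    proof -
      have "i \<le> d*i" using d by simp
      moreover have "d*(n+i)+m = d*i + (d*n+m)" by (simp add: algebra_simps)
      ultimately show ?thesis using m1 by linarith
    qed
    hence le': "real (Suc i) \<le> real (d*(n+i)+m)" by (simp only: of_nat_le_iff)
    have "2 * real ((d + 2*b) * n) + 1 \<le> real i" using i by linarith
    also have "\<dots> \<le> real (d*(n+i)+m)" using le' by simp
    finally have "\<bar>f i\<bar> \<le> C / real (d*(n+i)+m)^2" unfolding f_def by (rule C(2))
    also have "\<dots> \<le> C * (1 / real (Suc i)^2)"
      using C(1) le' by (simp add: divide_simps power_mono mult_left_mono)
    finally show "norm (norm (f i)) \<le> C * (1 / real (Suc i)^2)" by simp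
  qed
  have "(f has_sum V) UNIV" by (rule norm_summable_imp_has_sum[OF summ sums])
  hence "((\<lambda>i. Pn d a b n (real (d*(n+i)+m))) has_sum V) UNIV" unfolding f_def .
  hence "((\<lambda>k::nat. Pn d a b n (real k)) has_sum V) {k. d * n < k \<and> k mod d = m mod d}"
    using has_sum_reindex_bij_betw[OF bij_class[OF d m, of n], of "\<lambda>k. Pn d a b n (real k)"] by simp
  thus ?thesis unfolding V_def J_def .
qed



lemma has_sum_finite_Union_disj:
  fixes f :: "'a \<Rightarrow> real"
  assumes "finite I" "\<forall>i\<in>I. \<forall>i'\<in>I. i \<noteq> i' \<longrightarrow> S i \<inter> S i' = {}" "\<forall>i\<in>I. (f has_sum v i) (S i)"
  shows "(f has_sum sum v I) (\<Union>i\<in>I. S i)"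
  using assms
proof (induction I rule: finite_induct)
  case empty
  then show ?case by simp
next
  case (insert x F)
  have "(f has_sum (v x + sum v F)) (S x \<union> (\<Union>i\<in>F. S i))"
    using insert by (intro has_sum_Un_disjoint) auto
  thus ?case using insert by simp
qed

lemma periodic_class:
  fixes c :: "nat \<Rightarrow> real"
  assumes per: "\<forall>k\<ge>1. c (k + d) = c k" and d: "d > 0" and m: "m \<in> {1..d}"
    and k: "1 \<le> k" "k mod d = m mod d"
  shows "c k = c m"
proof -
  have "k \<in> {k. d*0 < k \<and> k mod d = m mod d}" using k by simp
  then obtain q where q: "k = d*(0+q)+m" using bij_class[OF d m, of 0] by (auto simp: bij_betw_def)
  have "c (d*q+m) = c m" for q
  proof (induction q)
    case 0 then show ?case by simp
  next
    case (Suc q)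
    have "c (d*Suc q+m) = c ((d*q+m) + d)" by (simp add: algebra_simps)
    also have "\<dots> = c (d*q+m)" using per m by simp
    finally show ?case using Suc by simp
  qed
  thus ?thesis using q by simp
qed

lemma Lser_eq:
  fixes c :: "nat \<Rightarrow> real"
  assumes per: "\<forall>k\<ge>1. c (k + d) = c k" and d: "d > 0" and j: "j \<ge> 2"
  shows "Lser c j = (\<Sum>m\<in>{1..d}. c m * zeta_m d m j)"
proof -
  define K where "K m = {k::nat. 1 \<le> k \<and> k mod d = m mod d}" for m
  have each: "((\<lambda>k. c k / real k ^ j) has_sum c m * zeta_m d m j) (K m)" if m: "m \<in> {1..d}" for m
  proof -
    have "((\<lambda>k. c m * (1 / real k ^ j)) has_sum c m * zeta_m d m j) (K m)"
      unfolding K_def zeta_eq[OF d m j] by (intro has_sum_cmult_right g_has_sum[OF d m j])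
    thus ?thesis
      by (rule has_sum_cong[THEN iffD1, rotated])
         (use periodic_class[OF per d m] in \<open>auto simp: K_def\<close>)
  qed
  have disj: "\<forall>m\<in>{1..d}. \<forall>m'\<in>{1..d}. m \<noteq> m' \<longrightarrow> K m \<inter> K m' = {}"
  proof (intro ballI impI)
    fix m m' assume "m \<in> {1..d}" "m' \<in> {1..d}" "m \<noteq> m'"
    hence "m mod d \<noteq> m' mod d"
      by (metis atLeastAtMost_iff le_neq_implies_less mod_less mod_self
          nat_less_le not_one_le_zero mod_less_divisor d)
    thus "K m \<inter> K m' = {}" by (auto simp: K_def)
  qed
  have un: "(\<Union>m\<in>{1..d}. K m) = {1..}"
  proof (intro equalityI subsetI)
    fix k assume "k \<in> (\<Union>m\<in>{1..d}. K m)" thus "k \<in> {1..}" by (auto simp: K_def)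
  next
    fix k :: nat assume k: "k \<in> {1..}"
    show "k \<in> (\<Union>m\<in>{1..d}. K m)"
    proof (cases "k mod d = 0")
      case True
      thus ?thesis using k d by (intro UN_I[of d]) (auto simp: K_def)
    next
      case False
      thus ?thesis using k d by (intro UN_I[of "k mod d"]) (auto simp: K_def)
    qed
  qed
  have "((\<lambda>k. c k / real k ^ j) has_sum (\<Sum>m\<in>{1..d}. c m * zeta_m d m j)) {1..}"
    using has_sum_finite_Union_disj[OF _ disj, of "\<lambda>k. c k / real k ^ j"] each un by simp
  thus ?thesis unfolding Lser_def by (rule infsumI)
qed



theorem proposition2p2:
  fixes d a b n :: nat and A :: "int \<Rightarrow> nat \<Rightarrow> real"
  assumes "d > 0" and "a > 0" and "b > 0" and "a \<ge> 2 * b" and "n > 0"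
    and pfd: "\<And>t::real. (\<forall>l\<in>{-int n..int n}. t \<noteq> real d * of_int l) \<Longrightarrow>
        Pn d a b n t = (\<Sum>j\<in>{1..a}. \<Sum>l\<in>{-int n..int n}. A l j / (t - real d * of_int l) ^ j)"
  shows "(\<forall>m\<in>{1..d}.
            ((\<lambda>k::nat. Pn d a b n (real k)) has_sum
               ((\<Sum>j\<in>{j. 2 \<le> j \<and> j \<le> a \<and> j mod 2 = a mod 2}. Acoef A n j * zeta_m d m j)
                 - Bcoef A d a n m))
            {k. d * n < k \<and> k mod d = m mod d})
       \<and> (\<forall>c::nat \<Rightarrow> real. (\<forall>k\<ge>1. c (k + d) = c k) \<longrightarrow>
            (\<Sum>m\<in>{1..d}. c m * (\<Sum>\<^sub>\<infinity>k\<in>{k. d * n < k \<and> k mod d = m mod d}. Pn d a b n (real k)))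
            = (\<Sum>j\<in>{j. 2 \<le> j \<and> j \<le> a \<and> j mod 2 = a mod 2}. Acoef A n j * Lser c j)
              - (\<Sum>m\<in>{1..d}. Bcoef A d a n m * c m))"
proof -
  define J where "J = {j. 2 \<le> j \<and> j \<le> a \<and> j mod 2 = a mod 2}"
  have M: "\<forall>m\<in>{1..d}.
            ((\<lambda>k::nat. Pn d a b n (real k)) has_sum
               ((\<Sum>j\<in>J. Acoef A n j * zeta_m d m j) - Bcoef A d a n m))
            {k. d * n < k \<and> k mod d = m mod d}"
    unfolding J_def using main_m[OF assms(1-4) pfd] by blast
  moreover have "\<forall>c::nat \<Rightarrow> real. (\<forall>k\<ge>1. c (k + d) = c k) \<longrightarrow>
            (\<Sum>m\<in>{1..d}. c m * (\<Sum>\<^sub>\<infinity>k\<in>{k. d * n < k \<and> k mod d = m mod d}. Pn d a b n (real k)))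
            = (\<Sum>j\<in>J. Acoef A n j * Lser c j) - (\<Sum>m\<in>{1..d}. Bcoef A d a n m * c m)"
  proof (intro allI impI)
    fix c :: "nat \<Rightarrow> real" assume per: "\<forall>k\<ge>1. c (k + d) = c k"
    have "(\<Sum>m\<in>{1..d}. c m * (\<Sum>\<^sub>\<infinity>k\<in>{k. d * n < k \<and> k mod d = m mod d}. Pn d a b n (real k)))
        = (\<Sum>m\<in>{1..d}. c m * ((\<Sum>j\<in>J. Acoef A n j * zeta_m d m j) - Bcoef A d a n m))"
      using M by (intro sum.cong refl) (simp add: infsumI)
    also have "\<dots> = (\<Sum>j\<in>J. Acoef A n j * (\<Sum>m\<in>{1..d}. c m * zeta_m d m j)) - (\<Sum>m\<in>{1..d}. Bcoef A d a n m * c m)"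
      by (simp add: right_diff_distrib sum_subtractf sum_distrib_left sum.swap[of _ J] mult_ac)
    also have "\<dots> = (\<Sum>j\<in>J. Acoef A n j * Lser c j) - (\<Sum>m\<in>{1..d}. Bcoef A d a n m * c m)"
      using Lser_eq[OF per assms(1)] by (simp add: J_def)
    finally show "(\<Sum>m\<in>{1..d}. c m * (\<Sum>\<^sub>\<infinity>k\<in>{k. d * n < k \<and> k mod d = m mod d}. Pn d a b n (real k)))
            = (\<Sum>j\<in>J. Acoef A n j * Lser c j) - (\<Sum>m\<in>{1..d}. Bcoef A d a n m * c m)" .
  qed
  ultimately show ?thesis unfolding J_def by blast
qed

end
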